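(* Let $M\in\mathbb{R}^{n\times n}$ be a P$_s$-matrix, $q\in\mathbb{R}^n$ and $r\ge2$. Then $$C:=\sup_{x\in\mathcal{L}_s(f_r,f_r(0))}\sigma_{\max}\big(\nabla^2 f_r(x)\big)<+\infty,$$ where for $r=2$, $\nabla^2 f_2(x)$ ranges over all elements of the generalized Hessian $\partial^2 f_2(x)$.
   Context: $f_r(x)=\frac1r\big[\langle x_+^r,(Mx+q)_+^r\rangle+\|x_-\|_r^r+\|(Mx+q)_-\|_r^r\big]$ with $a_+=\max\{a,0\}$, $a_-=\min\{a,0\}$ componentwise, $x_+^r$ the componentwise $r$th power of $x_+$, $\|z\|_r^r=\sum_i|z_i|^r$; $f_r$ is $C^2$ for $r>2$ and $C^1$ for $r=2$, in which case $\partial^2 f_2(x)$ denotes the Clarke generalized Jacobian of $\nabla f_2$ at $x$. $\mathcal{L}_s(f_r,\gamma)=\{x\in\mathbb{R}^n:\|x\|_0\le s,\ f_r(x)\le\gamma\}$, with $\|x\|_0$ the number of nonzero entries. $\sigma_{\max}(A)$ is the largest singular value of $A$. A P$_s$-matrix is a square matrix all of whose principal minors of order up to $s$ are positive. *)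

theory Defs
  imports "HOL-Analysis.Analysis"
begin

definition fr :: "real \<Rightarrow> real^'n^'n \<Rightarrow> real^'n \<Rightarrow> real^'n \<Rightarrow> real" where
  "fr r M q x = (1 / r) *
     ((\<Sum>i\<in>UNIV. (max (x$i) 0) powr r * (max ((M *v x + q)$i) 0) powr r)
      + (\<Sum>i\<in>UNIV. \<bar>min (x$i) 0\<bar> powr r)
      + (\<Sum>i\<in>UNIV. \<bar>min ((M *v x + q)$i) 0\<bar> powr r))"

definition l0 :: "real^'n \<Rightarrow> nat" where
  "l0 x = card {i. x$i \<noteq> 0}"

definition level_set :: "nat \<Rightarrow> (real^'n \<Rightarrow> real) \<Rightarrow> real \<Rightarrow> (real^'n) set" where
  "level_set s f \<gamma> = {x. l0 x \<le> s \<and> f x \<le> \<gamma>}"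

definition principal_minor :: "real^'n^'n \<Rightarrow> 'n set \<Rightarrow> real" where
  "principal_minor A I = (\<Sum>p\<in>{p. p permutes I}. of_int (sign p) * (\<Prod>i\<in>I. A$i$(p i)))"

definition P_s_matrix :: "nat \<Rightarrow> real^'n^'n \<Rightarrow> bool" where
  "P_s_matrix s A \<longleftrightarrow> (\<forall>I. I \<noteq> {} \<and> card I \<le> s \<longrightarrow> principal_minor A I > 0)"

definition sigma_max :: "real^'n^'m \<Rightarrow> real" where
  "sigma_max A = Sup {sqrt \<mu> | \<mu>. \<exists>v. v \<noteq> 0 \<and> (transpose A ** A) *v v = \<mu> *\<^sub>R v}"

definition grad :: "(real^'n \<Rightarrow> real) \<Rightarrow> real^'n \<Rightarrow> real^'n" where
  "grad f x = (\<chi> i. frechet_derivative f (at x) (axis i 1))"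

definition jacobian :: "(real^'n \<Rightarrow> real^'m) \<Rightarrow> real^'n \<Rightarrow> real^'n^'m" where
  "jacobian g x = matrix (frechet_derivative g (at x))"

definition hessian :: "(real^'n \<Rightarrow> real) \<Rightarrow> real^'n \<Rightarrow> real^'n^'n" where
  "hessian f x = jacobian (grad f) x"

definition clarke_jacobian :: "(real^'n \<Rightarrow> real^'m) \<Rightarrow> real^'n \<Rightarrow> (real^'n^'m) set" where
  "clarke_jacobian g x = convex hull
     {A. \<exists>y. (\<forall>k. g differentiable (at (y k))) \<and> y \<longlonglongrightarrow> x
            \<and> (\<lambda>k. jacobian g (y k)) \<longlonglongrightarrow> A}"

definition hess_set :: "real \<Rightarrow> real^'n^'n \<Rightarrow> real^'n \<Rightarrow> real^'n \<Rightarrow> (real^'n^'n) set" where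
  "hess_set r M q x = (if r = 2 then clarke_jacobian (grad (fr r M q)) x
                       else {hessian (fr r M q) x})"

end

theory Submission
  imports Defs
begin


lemma minor_det:
  fixes M :: "real^'n^'n"
  shows "principal_minor M I = det (\<chi> i j. if i\<in>I \<and> j\<in>I then M$i$j else if i = j then 1 else (0::real))"
proof -
  let ?A = "(\<chi> i j. if i\<in>I \<and> j\<in>I then M$i$j else if i = j then 1 else (0::real))"
  let ?g = "\<lambda>p. of_int (sign p) * (\<Prod>i\<in>UNIV. ?A$i$p i)"
  have sub: "{p. p permutes I} \<subseteq> {p. p permutes (UNIV::'n set)}"
    using permutes_subset by blast
  have z: "?g p = 0" if "p \<in> {p. p permutes (UNIV::'n set)} - {p. p permutes I}" for p
  proof -
    from that have pu: "p permutes UNIV" and np: "\<not> p permutes I" by auto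
    have "\<exists>i. i \<notin> I \<and> p i \<noteq> i"
    proof (rule ccontr)
      assume "\<not> ?thesis"
      hence "\<forall>i. i \<notin> I \<longrightarrow> p i = i" by blast
      hence "p permutes I" using permutes_superset[OF pu] by blast
      with np show False by simp
    qed
    then obtain i where i: "i \<notin> I" "p i \<noteq> i" by blast
    have "?A$i$p i = 0" using i by simp
    hence "(\<Prod>i\<in>UNIV. ?A$i$p i) = 0" by (meson UNIV_I finite prod_zero)
    thus ?thesis by simp
  qed
  have "det ?A = sum ?g {p. p permutes (UNIV::'n set)}" unfolding det_def ..
  also have "\<dots> = sum ?g {p. p permutes I}"
    by (rule sum.mono_neutral_right[OF finite_permutations[OF finite] sub]) (intro ballI z)
  also have "\<dots> = principal_minor M I"
    unfolding principal_minor_def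
  proof (rule sum.cong[OF refl])
    fix p assume "p \<in> {p. p permutes I}"
    hence p: "p permutes I" by simp
    have "(\<Prod>i\<in>UNIV. ?A$i$p i) = (\<Prod>i\<in>I. ?A$i$p i) * (\<Prod>i\<in>UNIV - I. ?A$i$p i)"
      using prod.subset_diff[of I UNIV "\<lambda>i. ?A$i$p i"] by (simp add: mult.commute)
    also have "(\<Prod>i\<in>UNIV - I. ?A$i$p i) = 1"
      by (rule prod.neutral) (use p in \<open>simp add: permutes_not_in\<close>)
    also have "(\<Prod>i\<in>I. ?A$i$p i) = (\<Prod>i\<in>I. M$i$p i)"
      by (rule prod.cong[OF refl]) (use p in \<open>simp add: permutes_in_image\<close>)
    finally show "?g p = of_int (sign p) * (\<Prod>i\<in>I. M$i$p i)" by simp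
  qed
  finally show ?thesis by simp
qed

lemma minor_zero:
  fixes M :: "real^'n^'n"
  assumes "d \<noteq> 0" "\<And>i. i \<notin> I \<Longrightarrow> d$i = 0" "\<And>i. i \<in> I \<Longrightarrow> (M *v d)$i = 0"
  shows "principal_minor M I = 0"
proof -
  let ?A = "(\<chi> i j. if i\<in>I \<and> j\<in>I then M$i$j else if i = j then 1 else (0::real))"
  have "?A *v d = 0"
  proof (rule vec_eq_iff[THEN iffD2], rule allI)
    fix i
    show "(?A *v d)$i = 0$i"
    proof (cases "i \<in> I")
      case True
      have "(?A *v d)$i = (\<Sum>j\<in>UNIV. M$i$j * d$j)"
        unfolding matrix_vector_mult_def using True assms(2)
        by (auto intro!: sum.cong)
      also have "\<dots> = (M *v d)$i" by (simp add: matrix_vector_mult_def)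
      finally show ?thesis using assms(3) True by simp
    next
      case False
      have "(?A *v d)$i = (\<Sum>j\<in>UNIV. (if i = j then 1 else 0) * d$j)"
        unfolding matrix_vector_mult_def using False
        by (auto intro!: sum.cong)
      also have "\<dots> = (\<Sum>j\<in>UNIV. if i = j then d$j else 0)" by (rule sum.cong) auto
      also have "\<dots> = d$i" by simp
      finally show ?thesis using assms(2) False by simp
    qed
  qed
  have "\<not> invertible ?A"
  proof
    assume "invertible ?A"
    then obtain B where B: "B ** ?A = mat 1" unfolding invertible_left_inverse by blast
    have "d = (B ** ?A) *v d" by (simp add: B)
    also have "\<dots> = B *v (?A *v d)" by (simp add: matrix_vector_mul_assoc)
    also have "\<dots> = 0" using \<open>?A *v d = 0\<close> by simp
    finally show False using assms(1) by simp
  qed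
  thus ?thesis unfolding minor_det by (simp add: invertible_det_nz)
qed



definition pp :: "real \<Rightarrow> real \<Rightarrow> real" where
  "pp a t = (max t 0) powr a"

lemma pp_nonneg: "pp a t \<ge> 0" by (simp add: pp_def)

lemma fr_alt:
  "fr r M q x = (1 / r) * ((\<Sum>i\<in>UNIV. pp r (x$i) * pp r ((M *v x + q)$i))
      + (\<Sum>i\<in>UNIV. pp r (-(x$i))) + (\<Sum>i\<in>UNIV. pp r (-((M *v x + q)$i))))"
proof -
  have e: "\<bar>min t 0\<bar> = max (-t) (0::real)" for t by (simp add: min_def max_def)
  show ?thesis unfolding fr_def pp_def e ..
qed

lemma pp_root:
  assumes "r > 0" "pp r t \<le> C"
  shows "max t 0 \<le> (max C 0) powr (1/r)"
proof -
  have "max t 0 = (pp r t) powr (1/r)"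
    using assms(1) by (simp add: pp_def powr_powr)
  also have "\<dots> \<le> (max C 0) powr (1/r)"
    using assms by (intro powr_mono2) (auto simp: pp_nonneg)
  finally show ?thesis .
qed

lemma pp_mult: "pp r a * pp r b = pp r (max a 0 * max b 0)"
  by (simp add: pp_def powr_mult)

lemma level_terms:
  fixes M :: "real^'n^'n"
  assumes r: "r > 0" and x: "fr r M q x \<le> c"
  defines "K \<equiv> (max (r*c) 0) powr (1/r)"
  shows "max (-(x$i)) 0 \<le> K" "max (-((M *v x + q)$i)) 0 \<le> K"
    "max (x$i) 0 * max ((M *v x + q)$i) 0 \<le> K"
proof -
  let ?A = "\<Sum>i\<in>UNIV. pp r (x$i) * pp r ((M *v x + q)$i)"
  let ?B = "\<Sum>i\<in>UNIV. pp r (-(x$i))"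
  let ?C = "\<Sum>i\<in>UNIV. pp r (-((M *v x + q)$i))"
  have A0: "?A \<ge> 0" and B0: "?B \<ge> 0" and C0: "?C \<ge> 0"
    by (auto intro!: sum_nonneg mult_nonneg_nonneg pp_nonneg)
  have "(1/r) * (?A + ?B + ?C) \<le> c" using x by (simp add: fr_alt)
  hence tot: "?A + ?B + ?C \<le> r * c" using r by (simp add: field_simps)
  have "pp r (x$i) * pp r ((M *v x + q)$i) \<le> ?A"
    by (rule member_le_sum) (auto intro!: mult_nonneg_nonneg pp_nonneg)
  hence "pp r (max (x$i) 0 * max ((M *v x + q)$i) 0) \<le> r * c"
    using tot B0 C0 by (simp add: pp_mult)
  from pp_root[OF r this] show "max (x$i) 0 * max ((M *v x + q)$i) 0 \<le> K"
    unfolding K_def by (smt (verit) mult_nonneg_nonneg max.cobounded2)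
  have "pp r (-(x$i)) \<le> ?B"
    by (rule member_le_sum) (auto intro!: pp_nonneg)
  hence "pp r (-(x$i)) \<le> r * c" using tot A0 C0 by simp
  from pp_root[OF r this] show "max (-(x$i)) 0 \<le> K" unfolding K_def .
  have "pp r (-((M *v x + q)$i)) \<le> ?C"
    by (rule member_le_sum) (auto intro!: pp_nonneg)
  hence "pp r (-((M *v x + q)$i)) \<le> r * c" using tot A0 B0 by simp
  from pp_root[OF r this] show "max (-((M *v x + q)$i)) 0 \<le> K" unfolding K_def .
qed



lemma mv_tendsto:
  fixes M :: "real^'n^'n"
  assumes "D \<longlonglongrightarrow> d"
  shows "(\<lambda>k. (M *v D k)$i) \<longlonglongrightarrow> (M *v d)$i"
  unfolding matrix_vector_mult_def using assms
  by (auto intro!: tendsto_intros tendsto_vec_nth)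

lemma level_bounded:
  fixes M :: "real^'n^'n"
  assumes P: "P_s_matrix s M" and r: "r > 0"
  shows "\<exists>R. \<forall>x\<in>level_set s (fr r M q) c. norm x \<le> R"
proof (rule ccontr)
  define K where "K \<equiv> (max (r*c) 0) powr (1/r)"
  assume "\<not> ?thesis"
  hence "\<forall>k::nat. \<exists>x. x \<in> level_set s (fr r M q) c \<and> norm x > real k + 1"
    by (auto simp: not_le)
  then obtain X where X': "\<forall>k. X k \<in> level_set s (fr r M q) c \<and> norm (X k) > real k + 1"
    by (rule choice[THEN exE])
  hence X: "\<And>k. X k \<in> level_set s (fr r M q) c" "\<And>k. norm (X k) > real k + 1"
    by auto
  have Xpos: "norm (X k) > 0" for k using X(2)[of k] by linarith
  define D where "D k = X k /\<^sub>R norm (X k)" for k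
  have "\<And>k. D k \<in> sphere 0 1" using Xpos by (simp add: D_def)
  then obtain d \<sigma> where d: "d \<in> sphere 0 1" and \<sigma>: "strict_mono (\<sigma> :: nat \<Rightarrow> nat)"
    and lim: "(D \<circ> \<sigma>) \<longlonglongrightarrow> d"
    using seq_compactE[OF compact_imp_seq_compact[OF compact_sphere, of 0 1], of D] \<open>\<And>k. D k \<in> sphere 0 1\<close>
    by blast
  define t where "t k = 1 / norm (X (\<sigma> k))" for k
  have t0: "t \<longlonglongrightarrow> 0"
  proof (rule Lim_null_comparison[OF _ LIMSEQ_inverse_real_of_nat])
    show "\<forall>\<^sub>F k in sequentially. norm (t k) \<le> inverse (real (Suc k))"
    proof (rule always_eventually, rule allI)
      fix k
      have "real k \<le> real (\<sigma> k)" using seq_suble[OF \<sigma>] by simp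
      hence "real (Suc k) \<le> norm (X (\<sigma> k))" using X(2)[of "\<sigma> k"] by simp
      thus "norm (t k) \<le> inverse (real (Suc k))"
        unfolding t_def using Xpos by (simp add: divide_simps)
    qed
  qed
  have limi: "(\<lambda>k. D (\<sigma> k) $ i) \<longlonglongrightarrow> d $ i" for i
    using tendsto_vec_nth[OF lim] by (simp add: o_def)
  have limM: "(\<lambda>k. (M *v D (\<sigma> k)) $ i) \<longlonglongrightarrow> (M *v d) $ i" for i
    using mv_tendsto[OF lim] by (simp add: o_def)
  have Xs: "X (\<sigma> k) = norm (X (\<sigma> k)) *\<^sub>R D (\<sigma> k)" for k
    using Xpos by (simp add: D_def)
  have tn: "t k * norm (X (\<sigma> k)) = 1" for k using Xpos by (simp add: t_def)
  have fX: "fr r M q (X k) \<le> c" for k using X(1)[of k] by (simp add: level_set_def)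
  note LT = level_terms[OF r fX, folded K_def]
  have ineqs: "- (D (\<sigma> k) $ i) \<le> K * t k"
    "- ((M *v D (\<sigma> k)) $ i + q$i * t k) \<le> K * t k"
    "max (D (\<sigma> k) $ i) 0 * max ((M *v D (\<sigma> k)) $ i + q$i * t k) 0 \<le> K * (t k)^2" for k i
  proof -
    let ?n = "norm (X (\<sigma> k))"
    have n: "?n > 0" by (rule Xpos)
    have tk: "t k = 1 / ?n" by (simp add: t_def)
    have x: "X (\<sigma> k) $ i = ?n * D (\<sigma> k) $ i" by (subst Xs) simp
    have y: "(M *v X (\<sigma> k) + q) $ i = ?n * ((M *v D (\<sigma> k)) $ i + q$i * t k)"
      using n by (subst Xs) (simp add: matrix_vector_mult_scaleR tk field_simps)
    have a: "- (?n * D (\<sigma> k) $ i) \<le> K" using LT(1)[of "\<sigma> k" i] x by simp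
    show "- (D (\<sigma> k) $ i) \<le> K * t k" using a n by (simp add: tk field_simps)
    have b: "- (?n * ((M *v D (\<sigma> k)) $ i + q$i * t k)) \<le> K" using LT(2)[of "\<sigma> k" i] y by simp
    have "- ((M *v D (\<sigma> k)) $ i + q$i * t k) = (- (?n * ((M *v D (\<sigma> k)) $ i + q$i * t k))) / ?n"
      using n by simp
    also have "\<dots> \<le> K / ?n" by (rule divide_right_mono[OF b]) (use n in simp)
    also have "\<dots> = K * t k" by (simp add: tk)
    finally show "- ((M *v D (\<sigma> k)) $ i + q$i * t k) \<le> K * t k" .
    have mx: "max (?n * u) 0 = ?n * max u 0" for u using n by (simp add: max_def mult_le_0_iff)
    have c: "?n * max (D (\<sigma> k) $ i) 0 * (?n * max ((M *v D (\<sigma> k)) $ i + q$i * t k) 0) \<le> K"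
      using LT(3)[of "\<sigma> k" i] x y mx by simp
    hence "?n^2 * (max (D (\<sigma> k) $ i) 0 * max ((M *v D (\<sigma> k)) $ i + q$i * t k) 0) \<le> K"
      by (simp add: power2_eq_square algebra_simps)
    thus "max (D (\<sigma> k) $ i) 0 * max ((M *v D (\<sigma> k)) $ i + q$i * t k) 0 \<le> K * (t k)^2"
      using n by (simp add: tk field_simps)
  qed
  have Kt: "(\<lambda>k. K * t k) \<longlonglongrightarrow> 0" using tendsto_mult_right_zero[OF t0] by simp
  have Kt2: "(\<lambda>k. K * (t k)^2) \<longlonglongrightarrow> 0"
  proof -
    have "(\<lambda>k. (t k)^2) \<longlonglongrightarrow> 0" using tendsto_power[OF t0, of 2] by simp
    from tendsto_mult_right_zero[OF this] show ?thesis by simp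
  qed
  have dpos: "d $ i \<ge> 0" for i
    using tendsto_le[OF trivial_limit_sequentially Kt tendsto_minus[OF limi[of i]]] ineqs(1)
    by auto
  have qt: "(\<lambda>k. (M *v D (\<sigma> k)) $ i + q$i * t k) \<longlonglongrightarrow> (M *v d) $ i" for i
    using tendsto_add[OF limM[of i] tendsto_mult[OF tendsto_const t0]] by simp
  have Mpos: "(M *v d) $ i \<ge> 0" for i
    using tendsto_le[OF trivial_limit_sequentially Kt tendsto_minus[OF qt[of i]]] ineqs(2)
    by auto
  have prod: "max (d $ i) 0 * max ((M *v d) $ i) 0 \<le> 0" for i
    using tendsto_le[OF trivial_limit_sequentially Kt2
        tendsto_mult[OF tendsto_max[OF limi[of i] tendsto_const] tendsto_max[OF qt[of i] tendsto_const]]]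
      ineqs(3) by auto
  define I where "I = {i. d $ i \<noteq> 0}"
  have d0: "d \<noteq> 0" using d by auto
  have Mz: "(M *v d) $ i = 0" if "i \<in> I" for i
  proof -
    have "d $ i > 0" using dpos[of i] that by (auto simp: I_def)
    hence "d $ i * (M *v d) $ i \<le> 0" using prod[of i] Mpos[of i] by (simp add: max_def)
    thus ?thesis using \<open>d $ i > 0\<close> Mpos[of i] by (simp add: mult_le_0_iff)
  qed
  have pm0: "principal_minor M I = 0"
    by (rule minor_zero[OF d0]) (auto simp: I_def Mz)
  have Ine: "I \<noteq> {}" using d0 by (auto simp: I_def vec_eq_iff)
  have "\<forall>\<^sub>F k in sequentially. \<forall>i. d $ i \<noteq> 0 \<longrightarrow> D (\<sigma> k) $ i \<noteq> 0"
  proof (rule eventually_all_finite)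
    fix i
    show "\<forall>\<^sub>F k in sequentially. d $ i \<noteq> 0 \<longrightarrow> D (\<sigma> k) $ i \<noteq> 0"
    proof (cases "d $ i = 0")
      case False
      show ?thesis using tendsto_imp_eventually_ne[OF limi[of i] False] by (simp add: eventually_mono)
    qed simp
  qed
  then obtain k where k: "\<And>i. d $ i \<noteq> 0 \<Longrightarrow> D (\<sigma> k) $ i \<noteq> 0"
    unfolding eventually_sequentially by blast
  have "I \<subseteq> {i. X (\<sigma> k) $ i \<noteq> 0}" using k by (auto simp: I_def D_def)
  hence "card I \<le> l0 (X (\<sigma> k))" unfolding l0_def by (intro card_mono) auto
  also have "\<dots> \<le> s" using X(1)[of "\<sigma> k"] by (simp add: level_set_def)
  finally have "principal_minor M I > 0" using P Ine by (simp add: P_s_matrix_def)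
  with pm0 show False by simp
qed



lemma pp_deriv:
  assumes a: "a > 1"
  shows "(pp a has_real_derivative a * pp (a - 1) t) (at t)"
proof (cases "t > 0")
  case True
  have "((\<lambda>z. z powr a) has_real_derivative a * t powr (a - 1)) (at t)"
    by (rule has_real_derivative_powr[OF True])
  hence "((\<lambda>z. z powr a) has_real_derivative a * pp (a - 1) t) (at t)"
    using True by (simp add: pp_def)
  thus ?thesis
    by (rule has_field_derivative_transform_within_open[where S="{0<..}"])
       (use True in \<open>auto simp: pp_def\<close>)
next
  case False
  show ?thesis
  proof (cases "t < 0")
    case True
    have "((\<lambda>z. 0) has_real_derivative 0) (at t)" by (rule DERIV_const)
    hence "((\<lambda>z. 0) has_real_derivative a * pp (a - 1) t) (at t)"
      using True by (simp add: pp_def)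
    thus ?thesis
      by (rule has_field_derivative_transform_within_open[where S="{..<0}"])
         (use True in \<open>auto simp: pp_def\<close>)
  next
    case False
    with \<open>\<not> t > 0\<close> have t: "t = 0" by simp
    have "((\<lambda>y. (pp a y - pp a 0) / (y - 0)) \<longlongrightarrow> 0) (at 0)"
    proof (rule Lim_null_comparison)
      show "\<forall>\<^sub>F y in at 0. norm ((pp a y - pp a 0) / (y - 0)) \<le> \<bar>y\<bar> powr (a - 1)"
      proof (rule always_eventually, rule allI)
        fix y :: real
        show "norm ((pp a y - pp a 0) / (y - 0)) \<le> \<bar>y\<bar> powr (a - 1)"
        proof (cases "y > 0")
          case True
          have "y powr a / y = y powr (a - 1)" using True by (simp add: powr_diff)
          thus ?thesis using True by (simp add: pp_def)
        next
          case False
          thus ?thesis by (simp add: pp_def max_def)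
        qed
      qed
      show "((\<lambda>y. \<bar>y\<bar> powr (a - 1)) \<longlongrightarrow> 0) (at (0::real))"
        by (rule tendsto_zero_powrI[where b="a - 1"]) (use a in \<open>auto intro!: tendsto_eq_intros\<close>)
    qed
    hence "(pp a has_real_derivative 0) (at 0)" by (simp add: has_field_derivative_iff)
    thus ?thesis using t by (simp add: pp_def)
  qed
qed

definition Dfr :: "real \<Rightarrow> real^'n^'n \<Rightarrow> real^'n \<Rightarrow> real^'n \<Rightarrow> real^'n \<Rightarrow> real" where
  "Dfr r M q x h = (1/r) * ((\<Sum>i\<in>UNIV. pp r (x$i) * ((M *v h)$i * (r * pp (r-1) ((M *v x + q)$i)))
        + h$i * (r * pp (r-1) (x$i)) * pp r ((M *v x + q)$i))
     + (\<Sum>i\<in>UNIV. - (h$i) * (r * pp (r-1) (-(x$i))))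
     + (\<Sum>i\<in>UNIV. - ((M *v h)$i) * (r * pp (r-1) (-((M *v x + q)$i)))))"

lemma fr_fun: "fr r M q = (\<lambda>x. (1 / r) * ((\<Sum>i\<in>UNIV. pp r (x$i) * pp r ((M *v x + q)$i))
      + (\<Sum>i\<in>UNIV. pp r (-(x$i))) + (\<Sum>i\<in>UNIV. pp r (-((M *v x + q)$i)))))"
  by (rule ext) (rule fr_alt)

lemma fr_has_deriv:
  fixes M :: "real^'n^'n"
  assumes r: "r > 1"
  shows "(fr r M q has_derivative Dfr r M q x) (at x)"
proof -
  have hx: "((\<lambda>x. x$i) has_derivative (\<lambda>h. h$i)) (at x)" for i :: 'n
    by (rule bounded_linear.has_derivative[OF bounded_linear_vec_nth has_derivative_ident])
  have hy: "((\<lambda>x. (M *v x + q)$i) has_derivative (\<lambda>h. (M *v h)$i)) (at x)" for i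
    by (rule bounded_linear.has_derivative[OF bounded_linear_vec_nth])
       (auto intro!: derivative_eq_intros bounded_linear.has_derivative[OF matrix_vector_mul_bounded_linear])
  note pd = pp_deriv[OF r]
  have "((\<lambda>x. (1 / r) * ((\<Sum>i\<in>UNIV. pp r (x$i) * pp r ((M *v x + q)$i))
      + (\<Sum>i\<in>UNIV. pp r (-(x$i))) + (\<Sum>i\<in>UNIV. pp r (-((M *v x + q)$i)))))
      has_derivative Dfr r M q x) (at x)"
    unfolding Dfr_def
    by (intro has_derivative_mult_right has_derivative_add has_derivative_sum has_derivative_mult
        DERIV_compose_FDERIV[OF pd] hx hy has_derivative_minus)
  thus ?thesis by (simp only: fr_fun)
qed



lemma powr_lip_core:
  fixes u v C a :: real
  assumes a: "a \<ge> 1" and uv: "0 \<le> u" "u \<le> v" "v \<le> C"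
  shows "v powr a - u powr a \<le> a * C powr (a - 1) * (v - u)"
proof (cases "u = 0")
  case True
  show ?thesis
  proof (cases "v = 0")
    case True thus ?thesis using \<open>u = 0\<close> a by auto
  next
    case False
    hence v: "v > 0" using uv by simp
    have "v powr a = v * v powr (a - 1)" using v by (simp add: powr_diff)
    also have "\<dots> \<le> v * C powr (a - 1)"
      using v uv a by (intro mult_left_mono powr_mono2) auto
    also have "\<dots> \<le> a * C powr (a - 1) * v"
      using mult_right_mono[OF a, of "C powr (a - 1) * v"] v by (simp add: algebra_simps)
    finally show ?thesis using True by simp
  qed
next
  case False
  hence u: "u > 0" using uv by simp
  show ?thesis
  proof (cases "u = v")
    case True thus ?thesis by simp
  next
    case False
    hence "u < v" using uv by simp
    have der: "((\<lambda>z. z powr a) has_real_derivative a * x powr (a - 1)) (at x)" if "u \<le> x" for x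
      by (rule has_real_derivative_powr) (use u that in linarith)
    obtain z where z: "u < z" "z < v" "v powr a - u powr a = (v - u) * (a * z powr (a - 1))"
      using MVT2[OF \<open>u < v\<close> der] by blast
    have "z powr (a - 1) \<le> C powr (a - 1)" using z u uv a by (intro powr_mono2) auto
    hence "(v - u) * (a * z powr (a - 1)) \<le> (v - u) * (a * C powr (a - 1))"
      using uv a by (intro mult_left_mono) auto
    thus ?thesis using z by (simp add: algebra_simps)
  qed
qed

lemma pp_lip:
  assumes a: "a \<ge> 1" and "\<bar>u\<bar> \<le> C" "\<bar>v\<bar> \<le> C"
  shows "\<bar>pp a u - pp a v\<bar> \<le> a * C powr (a - 1) * \<bar>u - v\<bar>"
proof -
  have m: "\<bar>max u 0 - max v 0\<bar> \<le> \<bar>u - v\<bar>" by (simp add: max_def)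
  have K0: "a * C powr (a - 1) \<ge> 0" using a by simp
  have gen: "\<bar>s powr a - w powr a\<bar> \<le> a * C powr (a - 1) * \<bar>s - w\<bar>"
    if "0 \<le> s" "s \<le> C" "0 \<le> w" "w \<le> C" for s w
  proof (cases "s \<le> w")
    case True
    have "w powr a - s powr a \<le> a * C powr (a - 1) * (w - s)"
      by (rule powr_lip_core) (use a that True in auto)
    moreover have "s powr a \<le> w powr a" using True that a by (intro powr_mono2) auto
    ultimately show ?thesis using True by (simp add: abs_if)
  next
    case False
    have "s powr a - w powr a \<le> a * C powr (a - 1) * (s - w)"
      by (rule powr_lip_core) (use a that False in auto)
    moreover have "w powr a \<le> s powr a" using False that a by (intro powr_mono2) auto
    ultimately show ?thesis using False by (simp add: abs_if)
  qed
  have "\<bar>pp a u - pp a v\<bar> \<le> a * C powr (a - 1) * \<bar>max u 0 - max v 0\<bar>"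
    unfolding pp_def by (rule gen) (use assms in auto)
  also have "\<dots> \<le> a * C powr (a - 1) * \<bar>u - v\<bar>" by (rule mult_left_mono[OF m K0])
  finally show ?thesis .
qed

lemma pp_bound:
  assumes "a \<ge> 1" "\<bar>u\<bar> \<le> C"
  shows "\<bar>pp a u\<bar> \<le> C powr a"
  unfolding pp_def using assms by (auto intro!: powr_mono2)

definition nice :: "'a::real_normed_vector set \<Rightarrow> ('a \<Rightarrow> real) \<Rightarrow> bool" where
  "nice S g \<longleftrightarrow> (\<exists>B. \<forall>x\<in>S. \<bar>g x\<bar> \<le> B) \<and> (\<exists>L. \<forall>x\<in>S. \<forall>y\<in>S. \<bar>g x - g y\<bar> \<le> L * norm (x - y))"

lemma nice_const: "nice S (\<lambda>x. c)"
proof -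
  have "\<forall>x\<in>S. \<bar>c\<bar> \<le> \<bar>c\<bar>" "\<forall>x\<in>S. \<forall>y\<in>S. \<bar>c - c\<bar> \<le> 0 * norm (x - y)" by auto
  thus ?thesis unfolding nice_def by blast
qed

lemma niceE:
  assumes "nice S g"
  obtains B L where "B \<ge> 0" "L \<ge> 0" "\<And>x. x \<in> S \<Longrightarrow> \<bar>g x\<bar> \<le> B"
    "\<And>x y. x \<in> S \<Longrightarrow> y \<in> S \<Longrightarrow> \<bar>g x - g y\<bar> \<le> L * norm (x - y)"
proof -
  from assms obtain B L where B: "\<forall>x\<in>S. \<bar>g x\<bar> \<le> B" and L: "\<forall>x\<in>S. \<forall>y\<in>S. \<bar>g x - g y\<bar> \<le> L * norm (x - y)"
    unfolding nice_def by blast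
  have "\<bar>g x - g y\<bar> \<le> max L 0 * norm (x - y)" if "x \<in> S" "y \<in> S" for x y
    using L that by (smt (verit) mult_right_mono norm_ge_zero)
  thus ?thesis using that[of "max B 0" "max L 0"] B by force
qed

lemma nice_add: "nice S f \<Longrightarrow> nice S g \<Longrightarrow> nice S (\<lambda>x. f x + g x)"
proof -
  assume "nice S f" "nice S g"
  then obtain B1 L1 B2 L2 where f: "\<And>x. x \<in> S \<Longrightarrow> \<bar>f x\<bar> \<le> B1"
    "\<And>x y. x \<in> S \<Longrightarrow> y \<in> S \<Longrightarrow> \<bar>f x - f y\<bar> \<le> L1 * norm (x - y)"
    and g: "\<And>x. x \<in> S \<Longrightarrow> \<bar>g x\<bar> \<le> B2"
    "\<And>x y. x \<in> S \<Longrightarrow> y \<in> S \<Longrightarrow> \<bar>g x - g y\<bar> \<le> L2 * norm (x - y)"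
    by (metis niceE)
  show ?thesis unfolding nice_def
  proof (intro conjI exI ballI)
    fix x assume "x \<in> S"
    thus "\<bar>f x + g x\<bar> \<le> B1 + B2" using f g by (smt (verit))
  next
    fix x y assume "x \<in> S" "y \<in> S"
    thus "\<bar>f x + g x - (f y + g y)\<bar> \<le> (L1 + L2) * norm (x - y)"
      using f(2)[of x y] g(2)[of x y] by (simp add: algebra_simps)
  qed
qed

lemma nice_minus: "nice S f \<Longrightarrow> nice S (\<lambda>x. - f x)"
proof -
  assume "nice S f"
  then obtain B L where "\<forall>x\<in>S. \<bar>f x\<bar> \<le> B" "\<forall>x\<in>S. \<forall>y\<in>S. \<bar>f x - f y\<bar> \<le> L * norm (x - y)"
    unfolding nice_def by blast
  moreover have "\<bar>- f x - - f y\<bar> = \<bar>f x - f y\<bar>" for x y by simp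
  ultimately have "\<forall>x\<in>S. \<bar>- f x\<bar> \<le> B" "\<forall>x\<in>S. \<forall>y\<in>S. \<bar>- f x - - f y\<bar> \<le> L * norm (x - y)"
    by auto
  thus ?thesis unfolding nice_def by blast
qed

lemma nice_mult: "nice S f \<Longrightarrow> nice S g \<Longrightarrow> nice S (\<lambda>x. f x * g x)"
proof -
  assume "nice S f" "nice S g"
  then obtain B1 L1 B2 L2 where B: "B1 \<ge> 0" "B2 \<ge> 0" and f: "\<And>x. x \<in> S \<Longrightarrow> \<bar>f x\<bar> \<le> B1"
    "\<And>x y. x \<in> S \<Longrightarrow> y \<in> S \<Longrightarrow> \<bar>f x - f y\<bar> \<le> L1 * norm (x - y)"
    and g: "\<And>x. x \<in> S \<Longrightarrow> \<bar>g x\<bar> \<le> B2"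
    "\<And>x y. x \<in> S \<Longrightarrow> y \<in> S \<Longrightarrow> \<bar>g x - g y\<bar> \<le> L2 * norm (x - y)"
    by (metis niceE)
  show ?thesis unfolding nice_def
  proof (intro conjI exI ballI)
    fix x assume "x \<in> S"
    hence "\<bar>f x\<bar> * \<bar>g x\<bar> \<le> B1 * B2" using f(1) g(1) B(1) by (intro mult_mono) auto
    thus "\<bar>f x * g x\<bar> \<le> B1 * B2" by (simp add: abs_mult)
  next
    fix x y assume xy: "x \<in> S" "y \<in> S"
    have "f x * g x - f y * g y = f x * (g x - g y) + g y * (f x - f y)" by (simp add: algebra_simps)
    hence "\<bar>f x * g x - f y * g y\<bar> \<le> \<bar>f x\<bar> * \<bar>g x - g y\<bar> + \<bar>g y\<bar> * \<bar>f x - f y\<bar>"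
      by (metis abs_mult abs_triangle_ineq)
    also have "\<dots> \<le> B1 * (L2 * norm (x - y)) + B2 * (L1 * norm (x - y))"
      using f(2)[OF xy] g(2)[OF xy] f(1)[OF xy(1)] g(1)[OF xy(2)] B
      by (intro add_mono mult_mono) auto
    finally show "\<bar>f x * g x - f y * g y\<bar> \<le> (B1 * L2 + B2 * L1) * norm (x - y)"
      by (simp add: algebra_simps)
  qed
qed

lemma nice_sum: "finite I \<Longrightarrow> (\<And>i. i \<in> I \<Longrightarrow> nice S (f i)) \<Longrightarrow> nice S (\<lambda>x. \<Sum>i\<in>I. f i x)"
  by (induction I rule: finite_induct) (auto intro!: nice_add nice_const)

lemma nice_pp:
  assumes a: "a \<ge> 1" and g: "nice S g"
  shows "nice S (\<lambda>x. pp a (g x))"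
proof -
  obtain B L where B: "B \<ge> 0" "L \<ge> 0" "\<And>x. x \<in> S \<Longrightarrow> \<bar>g x\<bar> \<le> B"
    "\<And>x y. x \<in> S \<Longrightarrow> y \<in> S \<Longrightarrow> \<bar>g x - g y\<bar> \<le> L * norm (x - y)"
    using niceE[OF g] by metis
  show ?thesis unfolding nice_def
  proof (intro conjI exI ballI)
    fix x assume "x \<in> S"
    thus "\<bar>pp a (g x)\<bar> \<le> B powr a" using pp_bound[OF a] B by blast
  next
    fix x y assume xy: "x \<in> S" "y \<in> S"
    have "\<bar>pp a (g x) - pp a (g y)\<bar> \<le> a * B powr (a - 1) * \<bar>g x - g y\<bar>"
      using pp_lip[OF a] B xy by blast
    also have "\<dots> \<le> a * B powr (a - 1) * (L * norm (x - y))"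
      using a B xy by (intro mult_left_mono) auto
    finally show "\<bar>pp a (g x) - pp a (g y)\<bar> \<le> (a * B powr (a - 1) * L) * norm (x - y)"
      by (simp add: algebra_simps)
  qed
qed

lemma nice_nth:
  fixes S :: "(real^'n) set"
  assumes "bounded S"
  shows "nice S (\<lambda>x. x$i)"
proof -
  obtain B where B: "\<And>x. x \<in> S \<Longrightarrow> norm x \<le> B" using assms by (meson bounded_iff)
  show ?thesis unfolding nice_def
  proof (intro conjI exI ballI)
    fix x assume "x \<in> S"
    thus "\<bar>x$i\<bar> \<le> B" using B component_le_norm_cart[of x i] by force
  next
    fix x y :: "real^'n"
    show "\<bar>x$i - y$i\<bar> \<le> 1 * norm (x - y)" using component_le_norm_cart[of "x - y" i] by simp
  qed
qed

lemma nice_Mq: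
  fixes S :: "(real^'n) set" and M :: "real^'n^'n"
  assumes "bounded S"
  shows "nice S (\<lambda>x. (M *v x + q)$i)"
proof -
  obtain B where B: "\<And>x. x \<in> S \<Longrightarrow> norm x \<le> B" using assms by (meson bounded_iff)
  obtain K where K: "\<And>x. norm (M *v x) \<le> norm x * K"
    and K0: "K > 0"
    using bounded_linear.pos_bounded[OF matrix_vector_mul_bounded_linear] by blast
  show ?thesis unfolding nice_def
  proof (intro conjI exI ballI)
    fix x assume x: "x \<in> S"
    have "\<bar>(M *v x + q)$i\<bar> \<le> norm (M *v x + q)" by (rule component_le_norm_cart)
    also have "\<dots> \<le> norm (M *v x) + norm q" by (rule norm_triangle_ineq)
    also have "\<dots> \<le> B * K + norm q"
      using K[of x] mult_right_mono[OF B[OF x], of K] K0 by linarith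
    finally show "\<bar>(M *v x + q)$i\<bar> \<le> B * K + norm q" .
  next
    fix x y :: "real^'n"
    have "\<bar>(M *v x + q)$i - (M *v y + q)$i\<bar> = \<bar>(M *v (x - y))$i\<bar>"
      by (simp add: matrix_vector_mult_diff_distrib)
    also have "\<dots> \<le> norm (M *v (x - y))" by (rule component_le_norm_cart)
    also have "\<dots> \<le> K * norm (x - y)" using K[of "x - y"] by (simp add: mult.commute)
    finally show "\<bar>(M *v x + q)$i - (M *v y + q)$i\<bar> \<le> K * norm (x - y)" .
  qed
qed



definition Bnd :: "real \<Rightarrow> (real^'n^'n) set" where
  "Bnd L = {A. \<forall>h. norm (A *v h) \<le> L * norm h}"

lemma Bnd_convex: "convex (Bnd L)"
proof (rule convexI)
  fix A B :: "real^'n^'n" and u v :: real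
  assume A: "A \<in> Bnd L" and B: "B \<in> Bnd L" and uv: "0 \<le> u" "0 \<le> v" "u + v = 1"
  show "u *\<^sub>R A + v *\<^sub>R B \<in> Bnd L" unfolding Bnd_def
  proof (rule, rule allI)
    fix h
    have "(u *\<^sub>R A + v *\<^sub>R B) *v h = u *\<^sub>R (A *v h) + v *\<^sub>R (B *v h)"
      by (simp add: matrix_vector_mult_add_rdistrib scaleR_matrix_vector_assoc)
    hence "norm ((u *\<^sub>R A + v *\<^sub>R B) *v h) \<le> u * norm (A *v h) + v * norm (B *v h)"
      using uv by (metis norm_triangle_le norm_scaleR abs_of_nonneg order_refl)
    also have "\<dots> \<le> u * (L * norm h) + v * (L * norm h)"
      using A B uv unfolding Bnd_def by (intro add_mono mult_left_mono) auto
    also have "\<dots> = (u + v) * (L * norm h)" by (simp add: algebra_simps)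
    also have "\<dots> = L * norm h" using uv by simp
    finally show "norm ((u *\<^sub>R A + v *\<^sub>R B) *v h) \<le> L * norm h" .
  qed
qed

lemma mv_tendsto2:
  fixes A :: "nat \<Rightarrow> real^'n^'n"
  assumes lim: "A \<longlonglongrightarrow> A0"
  shows "(\<lambda>k. A k *v h) \<longlonglongrightarrow> A0 *v h"
proof (rule vec_tendstoI)
  fix i
  have li: "(\<lambda>k. A k $ i) \<longlonglongrightarrow> A0 $ i" by (rule tendsto_vec_nth[OF lim])
  have "\<And>j. (\<lambda>k. A k $ i $ j) \<longlonglongrightarrow> A0 $ i $ j"
    by (rule tendsto_vec_nth[OF li])
  thus "(\<lambda>k. (A k *v h) $ i) \<longlonglongrightarrow> (A0 *v h) $ i"
    unfolding matrix_vector_mult_def vec_lambda_beta by (intro tendsto_sum tendsto_mult tendsto_const) blast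
qed

lemma Bnd_limit:
  fixes A :: "nat \<Rightarrow> real^'n^'n"
  assumes lim: "A \<longlonglongrightarrow> A0" and ev: "\<forall>\<^sub>F k in sequentially. A k \<in> Bnd L"
  shows "A0 \<in> Bnd L"
  unfolding Bnd_def
proof (rule, rule allI)
  fix h :: "real^'n"
  have "(\<lambda>k. norm (A k *v h)) \<longlonglongrightarrow> norm (A0 *v h)"
    by (intro tendsto_norm mv_tendsto2 lim)
  moreover have "\<forall>\<^sub>F k in sequentially. norm (A k *v h) \<le> L * norm h"
    using ev by (rule eventually_mono) (simp add: Bnd_def)
  ultimately show "norm (A0 *v h) \<le> L * norm h"
    by (rule tendsto_le[OF trivial_limit_sequentially tendsto_const])
qed

lemma sigma_Bnd:
  fixes A :: "real^'n^'n"
  assumes A: "A \<in> Bnd L" and L: "L \<ge> 0"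
  shows "sigma_max A \<le> max L (Sup ({}::real set))"
proof (cases "{sqrt \<mu> | \<mu>. \<exists>v. v \<noteq> 0 \<and> (transpose A ** A) *v v = \<mu> *\<^sub>R v} = {}")
  case True
  show ?thesis unfolding sigma_max_def by (subst True) simp
next
  case False
  have "sigma_max A \<le> L" unfolding sigma_max_def
  proof (rule cSup_least[OF False])
    fix s assume "s \<in> {sqrt \<mu> | \<mu>. \<exists>v. v \<noteq> 0 \<and> (transpose A ** A) *v v = \<mu> *\<^sub>R v}"
    then obtain \<mu> v where s: "s = sqrt \<mu>" and v: "v \<noteq> 0" and ev: "(transpose A ** A) *v v = \<mu> *\<^sub>R v"
      by blast
    have "\<mu> * (norm v)^2 = inner v (\<mu> *\<^sub>R v)" by (simp add: power2_norm_eq_inner)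
    also have "\<dots> = inner v (transpose A *v (A *v v))" by (simp add: ev[symmetric] matrix_vector_mul_assoc)
    also have "\<dots> = inner (A *v v) (A *v v)"
      by (metis dot_lmul_matrix vector_transpose_matrix)
    also have "\<dots> = (norm (A *v v))^2" by (simp add: power2_norm_eq_inner)
    also have "\<dots> \<le> (L * norm v)^2"
      using A unfolding Bnd_def by (intro power_mono) auto
    finally have "\<mu> * (norm v)^2 \<le> L^2 * (norm v)^2" by (simp add: power_mult_distrib)
    hence "\<mu> \<le> L^2" using v by simp
    hence "sqrt \<mu> \<le> sqrt (L^2)" by (rule real_sqrt_le_mono)
    thus "s \<le> L" using s L by simp
  qed
  thus ?thesis by simp
qed

lemma jac_Bnd:
  fixes G :: "real^'n \<Rightarrow> real^'n"
  assumes dG: "G differentiable (at y)" and e: "e > 0"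
    and lip: "\<And>z. norm (z - y) < e \<Longrightarrow> norm (G z - G y) \<le> L * norm (z - y)"
  shows "jacobian G y \<in> Bnd L"
proof -
  define G' where "G' = frechet_derivative G (at y)"
  have hd: "(G has_derivative G') (at y)" using dG unfolding G'_def by (rule frechet_derivative_works[THEN iffD1])
  have bl: "bounded_linear G'" using hd by (rule has_derivative_bounded_linear)
  have key: "norm (G' h) \<le> L * norm h" for h
  proof (rule ccontr)
    assume "\<not> ?thesis"
    hence gt: "norm (G' h) > L * norm h" by simp
    have h0: "h \<noteq> 0" using gt bl by (auto simp: linear_simps)
    hence nh: "norm h > 0" by simp
    define \<epsilon> where "\<epsilon> = (norm (G' h) - L * norm h) / (2 * norm h)"
    have \<epsilon>: "\<epsilon> > 0" using gt nh by (simp add: \<epsilon>_def)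
    from hd[unfolded has_derivative_at_alt] \<epsilon> obtain d where d: "d > 0"
      "\<And>z. norm (z - y) < d \<Longrightarrow> norm (G z - G y - G' (z - y)) \<le> \<epsilon> * norm (z - y)"
      by blast
    define t where "t = min d e / (2 * norm h)"
    have t: "t > 0" using d e nh by (simp add: t_def)
    define z where "z = y + t *\<^sub>R h"
    have zn: "norm (z - y) = t * norm h" using t by (simp add: z_def)
    have "t * norm h < min d e" using d e nh by (auto simp: t_def min_def field_simps)
    hence zd: "norm (z - y) < d" "norm (z - y) < e" using zn by auto
    have "G' (z - y) = t *\<^sub>R G' h" by (simp add: z_def linear_simps bl)
    hence "t * norm (G' h) = norm (G' (z - y))" using t by simp
    also have "\<dots> \<le> norm (G z - G y) + norm (G z - G y - G' (z - y))"
      by (metis norm_triangle_ineq4 diff_diff_eq2 norm_minus_commute add_diff_cancel_left' diff_add_cancel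
          norm_triangle_sub)
    also have "\<dots> \<le> L * (t * norm h) + \<epsilon> * (t * norm h)"
      using lip[OF zd(2)] d(2)[OF zd(1)] zn by (intro add_mono) auto
    finally have "t * norm (G' h) \<le> t * (L * norm h + \<epsilon> * norm h)" by (simp add: algebra_simps)
    hence "norm (G' h) \<le> L * norm h + \<epsilon> * norm h" using t by simp
    also have "\<epsilon> * norm h = (norm (G' h) - L * norm h) / 2" using nh by (simp add: \<epsilon>_def)
    finally have "norm (G' h) \<le> L * norm h + (norm (G' h) - L * norm h) / 2" .
    thus False using gt by (simp add: field_simps)
  qed
  have "jacobian G y *v h = G' h" for h
    unfolding jacobian_def G'_def[symmetric] using bl
    by (simp add: matrix_works bounded_linear.linear)
  thus ?thesis using key by (simp add: Bnd_def)
qed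



lemma grad_eq:
  fixes M :: "real^'n^'n"
  assumes "r > 1"
  shows "grad (fr r M q) = (\<lambda>x. \<chi> j. Dfr r M q x (axis j 1))"
  unfolding grad_def using frechet_derivative_at[OF fr_has_deriv[OF assms]] by metis

lemma nice_Dfr:
  fixes M :: "real^'n^'n"
  assumes r: "r \<ge> 2"
  shows "nice (cball 0 R) (\<lambda>x. Dfr r M q x h)"
proof -
  have b: "bounded (cball (0::real^'n) R)" by simp
  have r1: "1 \<le> r" "1 \<le> r - 1" using r by auto
  show ?thesis unfolding Dfr_def
    by (intro nice_mult nice_add nice_sum nice_minus nice_const nice_pp[OF r1(1)] nice_pp[OF r1(2)]
        nice_nth[OF b] nice_Mq[OF b]) simp_all
qed

lemma grad_lip:
  fixes M :: "real^'n^'n"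
  assumes r: "r \<ge> 2"
  shows "\<exists>L\<ge>0. \<forall>a\<in>cball 0 R. \<forall>b\<in>cball 0 R.
           norm (grad (fr r M q) a - grad (fr r M q) b) \<le> L * norm (a - b)"
proof -
  have "\<forall>j. \<exists>L. \<forall>a\<in>cball 0 R. \<forall>b\<in>cball 0 R.
          \<bar>Dfr r M q a (axis j 1) - Dfr r M q b (axis j 1)\<bar> \<le> L * norm (a - b)"
    using nice_Dfr[OF r] unfolding nice_def by blast
  then obtain Lf where Lf: "\<And>j a b. a \<in> cball 0 R \<Longrightarrow> b \<in> cball 0 R \<Longrightarrow>
          \<bar>Dfr r M q a (axis j 1) - Dfr r M q b (axis j 1)\<bar> \<le> Lf j * norm (a - b)"
    by metis
  have ge: "grad (fr r M q) = (\<lambda>x. \<chi> j. Dfr r M q x (axis j 1))"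
    by (rule grad_eq) (use r in auto)
  show ?thesis
  proof (intro exI[of _ "max (\<Sum>j\<in>UNIV. Lf j) 0"] conjI ballI)
    fix a b :: "real^'n" assume ab: "a \<in> cball 0 R" "b \<in> cball 0 R"
    have "norm (grad (fr r M q) a - grad (fr r M q) b)
        \<le> (\<Sum>j\<in>UNIV. \<bar>(grad (fr r M q) a - grad (fr r M q) b)$j\<bar>)" by (rule norm_le_l1_cart)
    also have "\<dots> \<le> (\<Sum>j\<in>UNIV. Lf j * norm (a - b))"
      by (rule sum_mono) (use Lf ab in \<open>simp add: ge\<close>)
    also have "\<dots> = (\<Sum>j\<in>UNIV. Lf j) * norm (a - b)" by (simp add: sum_distrib_right)
    also have "\<dots> \<le> max (\<Sum>j\<in>UNIV. Lf j) 0 * norm (a - b)"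
      by (intro mult_right_mono) auto
    finally show "norm (grad (fr r M q) a - grad (fr r M q) b) \<le> max (\<Sum>j\<in>UNIV. Lf j) 0 * norm (a - b)" .
  qed simp
qed

lemma jac_ball:
  fixes G :: "real^'n \<Rightarrow> real^'n"
  assumes lip: "\<forall>a\<in>cball 0 R. \<forall>b\<in>cball 0 R. norm (G a - G b) \<le> L * norm (a - b)"
    and dG: "G differentiable (at y)" and y: "norm y < R"
  shows "jacobian G y \<in> Bnd L"
proof (rule jac_Bnd[OF dG])
  show "R - norm y > 0" using y by simp
  fix z assume "norm (z - y) < R - norm y"
  hence "norm z \<le> R" using norm_triangle_ineq[of "z - y" y] by simp
  moreover have "norm y \<le> R" using y by simp
  ultimately show "norm (G z - G y) \<le> L * norm (z - y)" using lip by simp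
qed

theorem lemma5p1:
  fixes M :: "real^'n^'n" and q :: "real^'n" and r :: real and s :: nat
  assumes "P_s_matrix s M" and "r \<ge> 2"
  shows "bdd_above {sigma_max H | x H.
           x \<in> level_set s (fr r M q) (fr r M q 0) \<and> H \<in> hess_set r M q x}"
proof -
  have r0: "r > 0" using assms(2) by simp
  obtain R0 where R0: "\<And>x. x \<in> level_set s (fr r M q) (fr r M q 0) \<Longrightarrow> norm x \<le> R0"
    using level_bounded[OF assms(1) r0, of q "fr r M q 0"] by blast
  define R where "R = \<bar>R0\<bar> + 1"
  let ?G = "grad (fr r M q)"
  obtain L where L0: "L \<ge> 0" and lip: "\<forall>a\<in>cball 0 R. \<forall>b\<in>cball 0 R. norm (?G a - ?G b) \<le> L * norm (a - b)"
    using grad_lip[OF assms(2), of R M q] by blast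
  define c0 where "c0 = sigma_max (matrix (SOME f'::real^'n \<Rightarrow> real^'n. False))"
  define U where "U = max (max L (Sup ({}::real set))) c0"
  have main: "sigma_max H \<le> U" if x: "x \<in> level_set s (fr r M q) (fr r M q 0)" and H: "H \<in> hess_set r M q x" for x H
  proof -
    have xR: "norm x < R" using R0[OF x] by (simp add: R_def)
    have B: "sigma_max A \<le> U" if "A \<in> Bnd L" for A
      using sigma_Bnd[OF that L0] by (simp add: U_def)
    show ?thesis
    proof (cases "r = 2")
      case True
      have gen: "{A. \<exists>y. (\<forall>k. ?G differentiable (at (y k))) \<and> y \<longlonglongrightarrow> x
            \<and> (\<lambda>k. jacobian ?G (y k)) \<longlonglongrightarrow> A} \<subseteq> Bnd L"
      proof (rule subsetI)
        fix A assume "A \<in> {A. \<exists>y. (\<forall>k. ?G differentiable (at (y k))) \<and> y \<longlonglongrightarrow> x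
            \<and> (\<lambda>k. jacobian ?G (y k)) \<longlonglongrightarrow> A}"
        then obtain y where dy: "\<And>k. ?G differentiable (at (y k))" and yx: "y \<longlonglongrightarrow> x"
          and lj: "(\<lambda>k. jacobian ?G (y k)) \<longlonglongrightarrow> A" by blast
        have "\<forall>\<^sub>F k in sequentially. y k \<in> ball 0 R"
          using yx xR by (intro topological_tendstoD) auto
        hence "\<forall>\<^sub>F k in sequentially. jacobian ?G (y k) \<in> Bnd L"
          by (rule eventually_mono) (use jac_ball[OF lip dy] in auto)
        thus "A \<in> Bnd L" by (rule Bnd_limit[OF lj])
      qed
      have "clarke_jacobian ?G x \<subseteq> Bnd L" unfolding clarke_jacobian_def
        by (rule hull_minimal[where S=convex, OF gen Bnd_convex])
      thus ?thesis using H True B by (auto simp: hess_set_def)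
    next
      case False
      hence HH: "H = jacobian ?G x" using H by (simp add: hess_set_def hessian_def)
      show ?thesis
      proof (cases "?G differentiable (at x)")
        case True
        thus ?thesis using HH B jac_ball[OF lip True xR] by simp
      next
        case nd: False
        have "(\<lambda>f'. (?G has_derivative f') (at x)) = (\<lambda>f'. False)"
          using nd unfolding differentiable_def by blast
        hence "frechet_derivative ?G (at x) = (SOME f'::real^'n \<Rightarrow> real^'n. False)"
          unfolding frechet_derivative_def by simp
        hence "sigma_max H = c0" using HH by (simp add: jacobian_def c0_def)
        thus ?thesis by (simp add: U_def)
      qed
    qed
  qed
  show ?thesis by (rule bdd_aboveI[where M=U]) (use main in blast)
qed

end
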